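(* Let $\phi\in\Phi$, let $f:\mathbb{R}^n\to(-\infty,+\infty]$ be proper lsc, $\Omega\subseteq\mathbb{R}^n$ closed, $\delta\ge0$, $p\in[1,\infty]$, and $\mathcal{J}=\{J_1,\dots,J_m\}$ a partition of $\{1,\dots,n\}$. Suppose the problem $\min_x\{\|G_{\mathcal{J},p}(x)\|_0: f(x)\le\delta,\ x\in\Omega\}$ has a nonempty global optimal solution set and nonzero optimal value $s^*$, and let $\mathcal{S}=\{x\in\Omega: f(x)\le\delta\}$. Suppose there exists $\alpha>0$ such that $\pi_{s^*}(G_{\mathcal{J},p}(x))\ge\alpha$ for all $x\in\mathcal{S}$. Let $\bar\varrho=\phi'_-(1)/\alpha$. Then: (i) for all $x\in\mathcal{S}$ and $w\in[0,e]$, $\sum_{i=1}^m\phi(w_i)+\bar\varrho\langle e-w,G_{\mathcal{J},p}(x)\rangle\ge s^*$, where $s^*$ is also the optimal value of the MPEC $$\textstyle (Q)\ \min_{x,w}\{\sum_{i=1}^m\phi(w_i):\ \langle e-w,G_{\mathcal{J},p}(x)\rangle=0,\ 0\le w\le e,\ x\in\Omega,\ f(x)\le\delta\};$$ (ii) for every $\varrho>\bar\varrho$, the set of global optimal solutions of $$\textstyle \min_{x\in\mathbb{R}^n,w\in\mathbb{R}^m}\{\sum_{i=1}^m\phi(w_i)+\varrho\langle e-w,G_{\mathcal{J},p}(x)\rangle:\ f(x)\le\delta,\ x\in\Omega,\ 0\le w\le e\}$$ coincides with the set of global optimal solutions of $(Q)$.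
   Context: $\Phi$ is the family of proper lsc functions $\phi:\mathbb{R}\to(-\infty,+\infty]$ with $\mathrm{int}(\mathrm{dom}\,\phi)\supseteq[0,1]$, convex on $[0,1]$, such that $\min_{t\in[0,1]}\phi(t)=0$ is attained at a (fixed) point $t^*\in[0,1)$, and $\phi(1)=1$; $\phi'_-(1)$ is the left derivative of $\phi$ at $1$. $G_{\mathcal{J},p}(x):=(\|x_{J_1}\|_p,\dots,\|x_{J_m}\|_p)^T$; $\|v\|_0$ counts nonzero entries; $e$ is the all-ones vector; for a vector $v$, $\pi(v)$ is the vector of the entries of $|v|$ arranged in nonincreasing order and $\pi_i(v)$ its $i$-th entry. *)

theory Defs
  imports "HOL-Analysis.Analysis" "HOL-Library.Extended_Real" "HOL-Library.Multiset"
begin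

definition lsc :: "('a::topological_space \<Rightarrow> ereal) \<Rightarrow> bool" where
  "lsc f \<longleftrightarrow> (\<forall>x. f x \<le> Liminf (at x) f)"

definition proper_fun :: "('a \<Rightarrow> ereal) \<Rightarrow> bool" where
  "proper_fun f \<longleftrightarrow> (\<forall>x. f x \<noteq> -\<infinity>) \<and> (\<exists>x. f x \<noteq> \<infinity>)"

definition PhiFamily :: "(real \<Rightarrow> ereal) set" where
  "PhiFamily = {phi. proper_fun phi \<and> lsc phi
      \<and> {0..1} \<subseteq> interior {t. phi t < \<infinity>}
      \<and> convex_on {0..1} (\<lambda>t. real_of_ereal (phi t))
      \<and> (\<exists>ts\<in>{0..<1}. phi ts = 0 \<and> (\<forall>t\<in>{0..1}. phi ts \<le> phi t))
      \<and> phi 1 = 1}"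

definition left_deriv_at_1 :: "(real \<Rightarrow> ereal) \<Rightarrow> ereal" where
  "left_deriv_at_1 phi =
     Lim (at_left (1::real))
       (\<lambda>t. ereal ((real_of_ereal (phi 1) - real_of_ereal (phi t)) / (1 - t)))"

definition pnorm_sub :: "ereal \<Rightarrow> 'n set \<Rightarrow> real^'n \<Rightarrow> real" where
  "pnorm_sub p J x =
     (if p = \<infinity> then Max (insert 0 ((\<lambda>j. \<bar>x $ j\<bar>) ` J))
      else (\<Sum>j\<in>J. \<bar>x $ j\<bar> powr real_of_ereal p) powr (1 / real_of_ereal p))"

definition Gmap :: "('m::finite \<Rightarrow> 'n::finite set) \<Rightarrow> ereal \<Rightarrow> real^'n \<Rightarrow> real^'m" where
  "Gmap J p x = (\<chi> i. pnorm_sub p (J i) x)"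

definition is_partition :: "('m::finite \<Rightarrow> 'n::finite set) \<Rightarrow> bool" where
  "is_partition J \<longleftrightarrow> (\<forall>i. J i \<noteq> {}) \<and> (\<forall>i k. i \<noteq> k \<longrightarrow> J i \<inter> J k = {})
                      \<and> (\<Union>i. J i) = UNIV"

definition l0 :: "real^'m::finite \<Rightarrow> nat" where
  "l0 v = card {i. v $ i \<noteq> 0}"

text \<open>pi_k(v): k-th largest entry of |v| (k = 1, ..., m).\<close>
definition pi_k :: "nat \<Rightarrow> real^'m::finite \<Rightarrow> real" where
  "pi_k k v = rev (sorted_list_of_multiset (image_mset (\<lambda>i. \<bar>v $ i\<bar>) (mset_set UNIV))) ! (k - 1)"

definition inner_ew :: "real^'m::finite \<Rightarrow> real^'m \<Rightarrow> real" where
  "inner_ew w g = (\<Sum>i\<in>UNIV. (1 - w $ i) * g $ i)"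

definition sumphi :: "(real \<Rightarrow> ereal) \<Rightarrow> real^'m::finite \<Rightarrow> ereal" where
  "sumphi phi w = (\<Sum>i\<in>UNIV. phi (w $ i))"

definition box01 :: "(real^'m::finite) set" where
  "box01 = {w. \<forall>i. 0 \<le> w $ i \<and> w $ i \<le> 1}"

definition argmins :: "('a \<Rightarrow> ereal) \<Rightarrow> 'a set \<Rightarrow> 'a set" where
  "argmins obj F = {z\<in>F. \<forall>z'\<in>F. obj z \<le> obj z'}"

end

theory Submission
  imports Defs
begin

lemma slope_mono:
  fixes psi :: "real \<Rightarrow> real"
  assumes cv: "convex_on {0..1} psi" and x: "0 \<le> x" "x < t" "t < 1"
  shows "(psi 1 - psi x) / (1 - x) \<le> (psi 1 - psi t) / (1 - t)"
proof -
  have "(psi x - psi 1) / (x - 1) \<le> (psi t - psi 1) / (t - 1)"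
    using convex_on_slope_le(2)[OF cv, of x 1 t] x by auto
  moreover have "(psi x - psi 1) / (x - 1) = (psi 1 - psi x) / (1 - x)"
    by (metis minus_diff_eq minus_divide_divide)
  moreover have "(psi t - psi 1) / (t - 1) = (psi 1 - psi t) / (1 - t)"
    by (metis minus_diff_eq minus_divide_divide)
  ultimately show ?thesis by simp
qed

lemma mono_left_lim:
  fixes q :: "real \<Rightarrow> real"
  assumes mono: "\<And>x t. 0 \<le> x \<Longrightarrow> x < t \<Longrightarrow> t < 1 \<Longrightarrow> q x \<le> q t"
  shows "((\<lambda>t. ereal (q t)) \<longlongrightarrow> (SUP t\<in>{0..<1}. ereal (q t))) (at_left 1)"
proof (rule order_tendstoI)
  fix y assume "y < (SUP t\<in>{0..<1}. ereal (q t))"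
  then obtain t1 where t1: "t1 \<in> {0..<1}" "y < ereal (q t1)"
    by (auto simp: less_SUP_iff)
  have "eventually (\<lambda>t. t \<in> {t1<..<1}) (at_left (1::real))"
  proof -
    have "t1 < 1" using t1 by simp
    thus ?thesis by (rule eventually_at_left_real)
  qed
  then show "eventually (\<lambda>t. y < ereal (q t)) (at_left 1)"
  proof (rule eventually_mono)
    fix t assume "t \<in> {t1<..<1}"
    hence "q t1 \<le> q t" using mono t1 by auto
    hence "ereal (q t1) \<le> ereal (q t)" by simp
    thus "y < ereal (q t)" using t1(2) by (rule order.strict_trans2[rotated])
  qed
next
  fix y assume yS: "(SUP t\<in>{0..<1}. ereal (q t)) < y"
  have "eventually (\<lambda>t. t \<in> {0<..<1}) (at_left (1::real))"
    by (rule eventually_at_left_real) simp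
  then show "eventually (\<lambda>t. ereal (q t) < y) (at_left 1)"
  proof (rule eventually_mono)
    fix t assume "t \<in> {0<..<(1::real)}"
    hence "ereal (q t) \<le> (SUP t\<in>{0..<1}. ereal (q t))" by (intro SUP_upper) auto
    thus "ereal (q t) < y" using yS by (rule order.strict_trans1)
  qed
qed

lemma card_ge_from_pik:
  fixes g :: "real^'m::finite"
  assumes s1: "1 \<le> s" and sm: "s \<le> CARD('m)" and al: "\<alpha> \<le> pi_k s g"
  shows "s \<le> card {i. \<alpha> \<le> \<bar>g$i\<bar>}"
proof -
  define M where "M = image_mset (\<lambda>i. \<bar>g$i\<bar>) (mset_set (UNIV::'m set))"
  define L where "L = rev (sorted_list_of_multiset M)"
  have "length L = size M" by (metis L_def length_rev mset_sorted_list_of_multiset size_mset)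
  hence len: "length L = CARD('m)" by (simp add: M_def)
  have sorted: "sorted_wrt (\<ge>) L"
    unfolding L_def sorted_wrt_rev by (metis sorted_sorted_list_of_multiset)
  have Ls: "\<alpha> \<le> L ! (s-1)" using al by (simp add: pi_k_def L_def M_def)
  have all: "\<forall>v\<in>set (take s L). \<alpha> \<le> v"
  proof
    fix v assume "v \<in> set (take s L)"
    then obtain j where j: "j < length (take s L)" "v = take s L ! j"
      by (metis in_set_conv_nth)
    hence js: "j < s" "v = L ! j" using len sm by auto
    have "L ! (s-1) \<le> L ! j"
    proof (cases "j = s - 1")
      case False
      hence "j < s - 1" using js by simp
      thus ?thesis using sorted_wrt_nth_less[OF sorted, of j "s-1"] len sm s1 by simp
    qed simp
    thus "\<alpha> \<le> v" using Ls js by simp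
  qed
  have tk: "filter (\<lambda>v. \<alpha> \<le> v) (take s L) = take s L" using all by simp
  have "s = length (filter (\<lambda>v. \<alpha> \<le> v) (take s L))" using tk len sm by simp
  also have "\<dots> \<le> length (filter (\<lambda>v. \<alpha> \<le> v) L)"
  proof -
    have "L = take s L @ drop s L" by simp
    hence "length (filter (\<lambda>v. \<alpha> \<le> v) L) = length (filter (\<lambda>v. \<alpha> \<le> v) (take s L))
        + length (filter (\<lambda>v. \<alpha> \<le> v) (drop s L))"
      by (metis filter_append length_append)
    thus ?thesis by simp
  qed
  also have "\<dots> = size (filter_mset (\<lambda>v. \<alpha> \<le> v) M)"
  proof -
    have "mset L = M" by (simp add: L_def)
    thus ?thesis by (metis mset_filter size_mset)
  qed
  also have "\<dots> = card {i. \<alpha> \<le> \<bar>g$i\<bar>}"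
    by (simp add: M_def filter_mset_image_mset)
  finally show ?thesis .
qed

lemma core_real:
  fixes psi :: "real \<Rightarrow> real" and g w :: "real^'m::finite"
  assumes psi0: "\<forall>t\<in>{0..1}. 0 \<le> psi t" and psi1: "psi 1 = 1" and d0: "0 \<le> d"
   and dq: "\<forall>t\<in>{0..<1}. 1 - psi t \<le> d * (1 - t)" and w: "w \<in> box01" and g: "\<forall>i. 0 \<le> g$i"
   and a: "\<alpha> > 0" and c: "s \<le> card {i. \<alpha> \<le> g$i}"
  shows "real s \<le> (\<Sum>i\<in>UNIV. psi (w$i)) + d/\<alpha> * inner_ew w g"
proof -
  let ?A = "{i. \<alpha> \<le> g$i}"
  have tm: "(if i \<in> ?A then 1 else 0) \<le> psi (w$i) + d/\<alpha> * ((1 - w$i) * g$i)" for i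
  proof -
    have w01: "0 \<le> w$i" "w$i \<le> 1" using w by (auto simp: box01_def)
    have nn: "0 \<le> d/\<alpha> * ((1 - w$i) * g$i)" using d0 a w01 g by simp
    show ?thesis
    proof (cases "i \<in> ?A")
      case False thus ?thesis using psi0 w01 nn by simp
    next
      case True
      show ?thesis
      proof (cases "w$i = 1")
        case True thus ?thesis using psi1 nn by simp
      next
        case False
        hence lt: "w$i < 1" using w01 by simp
        have "1 - psi (w$i) \<le> d * (1 - w$i)" using dq w01 lt by auto
        also have "d*(1-w$i) \<le> d/\<alpha> * ((1 - w$i) * g$i)"
        proof -
          have "g$i/\<alpha> \<ge> 1" using True a by simp
          hence "d*(1-w$i)*1 \<le> d*(1-w$i)*(g$i/\<alpha>)" using d0 lt by (intro mult_left_mono) auto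
          thus ?thesis by (simp add: field_simps)
        qed
        finally show ?thesis using True by simp
      qed
    qed
  qed
  have "real s \<le> real (card ?A)" using c by simp
  also have "real (card ?A) = (\<Sum>i\<in>UNIV. if i \<in> ?A then 1 else 0)"
    using sum.inter_filter[of UNIV "\<lambda>_. (1::real)" "\<lambda>i. i \<in> ?A"] by simp
  also have "\<dots> \<le> (\<Sum>i\<in>UNIV. psi (w$i) + d/\<alpha> * ((1 - w$i) * g$i))"
    by (rule sum_mono) (rule tm)
  also have "\<dots> = (\<Sum>i\<in>UNIV. psi (w$i)) + d/\<alpha> * inner_ew w g"
    by (simp add: inner_ew_def sum.distrib sum_distrib_left)
  finally show ?thesis .
qed

lemma core_zero:
  fixes psi :: "real \<Rightarrow> real" and g w :: "real^'m::finite"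
  assumes psi0: "\<forall>t\<in>{0..1}. 0 \<le> psi t" and psi1: "psi 1 = 1"
   and z: "inner_ew w g = 0" and w: "w \<in> box01" and g: "\<forall>i. 0 \<le> g$i"
   and a: "\<alpha> > 0" and c: "s \<le> card {i. \<alpha> \<le> g$i}"
  shows "real s \<le> (\<Sum>i\<in>UNIV. psi (w$i))"
proof -
  let ?A = "{i. \<alpha> \<le> g$i}"
  have nn: "\<forall>i\<in>UNIV. 0 \<le> (1 - w$i) * g$i" using w g by (auto simp: box01_def)
  have zi: "(1 - w$i) * g$i = 0" for i
    using z nn sum_nonneg_eq_0_iff[of UNIV "\<lambda>i. (1 - w$i) * g$i"] by (simp add: inner_ew_def)
  have tm: "(if i \<in> ?A then 1 else 0) \<le> psi (w$i)" for i
  proof -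
    have w01: "0 \<le> w$i" "w$i \<le> 1" using w by (auto simp: box01_def)
    show ?thesis
    proof (cases "i \<in> ?A")
      case False thus ?thesis using psi0 w01 by simp
    next
      case True
      hence "g$i \<noteq> 0" using a by auto
      hence "w$i = 1" using zi[of i] by simp
      thus ?thesis using psi1 by simp
    qed
  qed
  have "real s \<le> real (card ?A)" using c by simp
  also have "real (card ?A) = (\<Sum>i\<in>UNIV. if i \<in> ?A then 1 else 0)"
    using sum.inter_filter[of UNIV "\<lambda>_. (1::real)" "\<lambda>i. i \<in> ?A"] by simp
  also have "\<dots> \<le> (\<Sum>i\<in>UNIV. psi (w$i))"
    by (rule sum_mono) (rule tm)
  finally show ?thesis .
qed

lemma G_nonneg: "0 \<le> Gmap J p x $ i"
  by (auto simp: Gmap_def pnorm_sub_def intro: Max_ge)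

lemma phi_fin:
  assumes phi: "phi \<in> PhiFamily" and t: "0 \<le> t" "t \<le> 1"
  shows "phi t = ereal (real_of_ereal (phi t))"
proof -
  have "{0..1} \<subseteq> interior {t. phi t < \<infinity>}" using phi by (simp add: PhiFamily_def)
  hence "t \<in> interior {t. phi t < \<infinity>}" using t by auto
  hence "phi t < \<infinity>" using interior_subset by blast
  moreover have "phi t \<noteq> -\<infinity>" using phi by (simp add: PhiFamily_def proper_fun_def)
  ultimately show ?thesis by (cases "phi t") auto
qed

lemma phi_one: "phi \<in> PhiFamily \<Longrightarrow> phi 1 = 1"
  by (simp add: PhiFamily_def)

lemma phi_ts:
  assumes phi: "phi \<in> PhiFamily"
  obtains ts where "0 \<le> ts" "ts < 1" "phi ts = 0" "\<forall>t\<in>{0..1}. phi ts \<le> phi t"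
  using phi unfolding PhiFamily_def by auto

lemma phi_nonneg:
  assumes phi: "phi \<in> PhiFamily" and t: "0 \<le> t" "t \<le> 1"
  shows "0 \<le> real_of_ereal (phi t)"
proof -
  obtain ts where "phi ts = 0" "\<forall>t\<in>{0..1}. phi ts \<le> phi t" using phi_ts[OF phi] by blast
  hence "0 \<le> phi t" using t by auto
  thus ?thesis by (rule real_of_ereal_pos)
qed

lemma phi_convex: "phi \<in> PhiFamily \<Longrightarrow> convex_on {0..1} (\<lambda>t. real_of_ereal (phi t))"
  by (simp add: PhiFamily_def)

lemma left_deriv_ge:
  assumes phi: "phi \<in> PhiFamily" and t: "0 \<le> t" "t < 1"
  shows "ereal ((1 - real_of_ereal (phi t)) / (1 - t)) \<le> left_deriv_at_1 phi"
proof -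
  define q where "q t = (real_of_ereal (phi 1) - real_of_ereal (phi t)) / (1 - t)" for t
  have mono: "q x \<le> q y" if "0 \<le> x" "x < y" "y < 1" for x y
    unfolding q_def by (rule slope_mono[OF phi_convex[OF phi] that])
  have lim: "((\<lambda>t. ereal (q t)) \<longlongrightarrow> (SUP t\<in>{0..<1}. ereal (q t))) (at_left 1)"
    by (rule mono_left_lim) (rule mono)
  have "Lim (at_left 1) (\<lambda>t. ereal (q t)) = (SUP t\<in>{0..<1}. ereal (q t))"
    by (rule tendsto_Lim[OF _ lim]) simp
  moreover have "left_deriv_at_1 phi = Lim (at_left 1) (\<lambda>t. ereal (q t))"
    by (simp add: left_deriv_at_1_def q_def)
  ultimately have "left_deriv_at_1 phi = (SUP t\<in>{0..<1}. ereal (q t))" by simp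
  moreover have "ereal (q t) \<le> (SUP t\<in>{0..<1}. ereal (q t))" using t by (intro SUP_upper) auto
  ultimately show ?thesis using phi_one[OF phi] by (simp add: q_def)
qed

theorem theorem3p1:
  fixes phi :: "real \<Rightarrow> ereal"
    and f :: "real^'n::finite \<Rightarrow> ereal"
    and \<Omega> :: "(real^'n) set"
    and \<delta> :: real and p :: ereal
    and J :: "'m::finite \<Rightarrow> 'n set"
    and s :: nat and \<alpha> :: real
  assumes phi: "phi \<in> PhiFamily"
    and f_proper: "proper_fun f" and f_lsc: "lsc f"
    and \<Omega>_closed: "closed \<Omega>"
    and \<delta>_nonneg: "\<delta> \<ge> 0"
    and p_range: "1 \<le> p"
    and J_part: "is_partition J"
    and s_opt: "\<exists>x\<in>{x\<in>\<Omega>. f x \<le> ereal \<delta>}. l0 (Gmap J p x) = s"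
    and s_min: "\<forall>x\<in>{x\<in>\<Omega>. f x \<le> ereal \<delta>}. s \<le> l0 (Gmap J p x)"
    and s_nonzero: "s \<noteq> 0"
    and \<alpha>_pos: "\<alpha> > 0"
    and \<alpha>_bound: "\<forall>x\<in>{x\<in>\<Omega>. f x \<le> ereal \<delta>}. pi_k s (Gmap J p x) \<ge> \<alpha>"
  shows "(\<forall>x\<in>{x\<in>\<Omega>. f x \<le> ereal \<delta>}. \<forall>w\<in>box01.
            sumphi phi w + (left_deriv_at_1 phi / ereal \<alpha>) * ereal (inner_ew w (Gmap J p x))
              \<ge> ereal (real s))
         \<and> (INF z\<in>{(x, w). inner_ew w (Gmap J p x) = 0 \<and> w \<in> box01 \<and> x \<in> \<Omega> \<and> f x \<le> ereal \<delta>}.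
               sumphi phi (snd z)) = ereal (real s)
         \<and> (\<forall>\<rho>::real. ereal \<rho> > left_deriv_at_1 phi / ereal \<alpha> \<longrightarrow>
              argmins (\<lambda>(x, w). sumphi phi w + ereal (\<rho> * inner_ew w (Gmap J p x)))
                {(x, w). f x \<le> ereal \<delta> \<and> x \<in> \<Omega> \<and> w \<in> box01}
            = argmins (\<lambda>(x, w). sumphi phi w)
                {(x, w). inner_ew w (Gmap J p x) = 0 \<and> w \<in> box01 \<and> x \<in> \<Omega> \<and> f x \<le> ereal \<delta>})"
proof -
  define psi where "psi t = real_of_ereal (phi t)" for t
  define D where "D = left_deriv_at_1 phi"
  have psi0: "\<forall>t\<in>{0..1}. 0 \<le> psi t" using phi_nonneg[OF phi] by (auto simp: psi_def)
  have psi1: "psi 1 = 1" using phi_one[OF phi] by (simp add: psi_def)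
  obtain ts where ts: "0 \<le> ts" "ts < 1" "phi ts = 0" using phi_ts[OF phi] by blast
  have psits: "psi ts = 0" using ts by (simp add: psi_def)
  have Dge: "\<forall>t\<in>{0..<1}. ereal ((1 - psi t) / (1 - t)) \<le> D"
    using left_deriv_ge[OF phi] by (auto simp: psi_def D_def)
  have Dpos: "ereal (1 / (1 - ts)) \<le> D" using Dge[rule_format, of ts] ts psits by simp
  have Dnm: "D \<noteq> -\<infinity>" using Dpos by auto
  have fin_case: "0 \<le> d \<and> (\<forall>t\<in>{0..<1}. 1 - psi t \<le> d * (1 - t))" if Dd: "D = ereal d" for d
  proof
    have "1 / (1 - ts) \<le> d" using Dpos Dd by simp
    moreover have "0 < 1 / (1 - ts)" using ts by simp
    ultimately show "0 \<le> d" by linarith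
    show "\<forall>t\<in>{0..<1}. 1 - psi t \<le> d * (1 - t)"
    proof
      fix t :: real assume t: "t \<in> {0..<1}"
      hence "(1 - psi t) / (1 - t) \<le> d" using Dge Dd by auto
      thus "1 - psi t \<le> d * (1 - t)" using t by (simp add: pos_divide_le_eq)
    qed
  qed
  have sum_eq: "sumphi phi w = ereal (\<Sum>i\<in>UNIV. psi (w$i))" if w: "w \<in> box01" for w :: "real^'m"
  proof -
    have "sumphi phi w = (\<Sum>i\<in>UNIV. ereal (psi (w$i)))"
      unfolding sumphi_def psi_def
      by (rule sum.cong[OF refl], rule phi_fin[OF phi]) (use w in \<open>auto simp: box01_def\<close>)
    thus ?thesis by simp
  qed
  have Gnn: "\<forall>i. 0 \<le> Gmap J p x $ i" for x by (simp add: G_nonneg)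
  have card_S: "s \<le> card {i. \<alpha> \<le> Gmap J p x $ i}" if x: "x \<in> {x\<in>\<Omega>. f x \<le> ereal \<delta>}" for x
  proof -
    have "s \<le> l0 (Gmap J p x)" using s_min x by blast
    also have "\<dots> \<le> CARD('m)" unfolding l0_def by (rule card_mono) auto
    finally have sm: "s \<le> CARD('m)" .
    have "s \<le> card {i. \<alpha> \<le> \<bar>Gmap J p x $ i\<bar>}"
      using card_ge_from_pik[OF _ sm] s_nonzero \<alpha>_bound x by auto
    thus ?thesis using Gnn[of x] by simp
  qed
  have inner_nn: "0 \<le> inner_ew w (Gmap J p x)" if w: "w \<in> box01" for w :: "real^'m" and x
    unfolding inner_ew_def using w Gnn[of x] by (intro sum_nonneg) (auto simp: box01_def)

  have P1: "\<forall>x\<in>{x\<in>\<Omega>. f x \<le> ereal \<delta>}. \<forall>w\<in>box01.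
            sumphi phi w + (left_deriv_at_1 phi / ereal \<alpha>) * ereal (inner_ew w (Gmap J p x))
              \<ge> ereal (real s)"
  proof (intro ballI)
    fix x and w :: "real^'m" assume x: "x \<in> {x\<in>\<Omega>. f x \<le> ereal \<delta>}" and w: "w \<in> box01"
    let ?I = "inner_ew w (Gmap J p x)"
    have I0: "0 \<le> ?I" by (rule inner_nn[OF w])
    show "sumphi phi w + (left_deriv_at_1 phi / ereal \<alpha>) * ereal ?I \<ge> ereal (real s)"
    proof (cases D)
      case (real d)
      with fin_case have d: "0 \<le> d" "\<forall>t\<in>{0..<1}. 1 - psi t \<le> d * (1 - t)" by auto
      have "real s \<le> (\<Sum>i\<in>UNIV. psi (w$i)) + d/\<alpha> * ?I"
        by (rule core_real[OF psi0 psi1 d w Gnn \<alpha>_pos card_S[OF x]])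
      moreover have "sumphi phi w + (left_deriv_at_1 phi / ereal \<alpha>) * ereal ?I
          = ereal ((\<Sum>i\<in>UNIV. psi (w$i)) + d/\<alpha> * ?I)"
        using real sum_eq[OF w] \<alpha>_pos by (simp add: D_def)
      ultimately show ?thesis by simp
    next
      case PInf
      show ?thesis
      proof (cases "?I = 0")
        case True
        have "real s \<le> (\<Sum>i\<in>UNIV. psi (w$i))"
          by (rule core_zero[OF psi0 psi1 True w Gnn \<alpha>_pos card_S[OF x]])
        thus ?thesis using True sum_eq[OF w] PInf by (simp add: D_def zero_ereal_def[symmetric])
      next
        case False
        hence "0 < ?I" using I0 by simp
        thus ?thesis using PInf sum_eq[OF w] \<alpha>_pos by (simp add: D_def)
      qed
    next
      case MInf with Dnm show ?thesis by simp
    qed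
  qed

  obtain x0 where x0: "x0 \<in> {x\<in>\<Omega>. f x \<le> ereal \<delta>}" "l0 (Gmap J p x0) = s" using s_opt by blast
  define w0 :: "real^'m" where "w0 = (\<chi> i. if Gmap J p x0 $ i \<noteq> 0 then 1 else ts)"
  have w0box: "w0 \<in> box01" using ts by (auto simp: box01_def w0_def)
  have w0inner: "inner_ew w0 (Gmap J p x0) = 0"
    unfolding inner_ew_def by (rule sum.neutral) (auto simp: w0_def)
  have w0sum: "(\<Sum>i\<in>UNIV. psi (w0$i)) = real s"
  proof -
    have "(\<Sum>i\<in>UNIV. psi (w0$i)) = (\<Sum>i\<in>UNIV. if Gmap J p x0 $ i \<noteq> 0 then 1 else 0)"
      by (rule sum.cong) (auto simp: w0_def psi1 psits)
    also have "\<dots> = real (card {i. Gmap J p x0 $ i \<noteq> 0})"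
      using sum.inter_filter[of UNIV "\<lambda>_. (1::real)" "\<lambda>i. Gmap J p x0 $ i \<noteq> 0"] by simp
    also have "\<dots> = real s" using x0 by (simp add: l0_def)
    finally show ?thesis .
  qed
  have z0val: "sumphi phi w0 = ereal (real s)" using sum_eq[OF w0box] w0sum by simp
  let ?Q = "{(x, w). inner_ew w (Gmap J p x) = 0 \<and> w \<in> box01 \<and> x \<in> \<Omega> \<and> f x \<le> ereal \<delta>}"
  have z0Q: "(x0, w0) \<in> ?Q" using x0 w0box w0inner by auto
  have Qlow: "ereal (real s) \<le> sumphi phi w" if "(x, w) \<in> ?Q" for x w
  proof -
    have "real s \<le> (\<Sum>i\<in>UNIV. psi (w$i))"
      using that by (intro core_zero[OF psi0 psi1 _ _ Gnn \<alpha>_pos card_S]) auto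
    thus ?thesis using that sum_eq by auto
  qed
  have P2: "(INF z\<in>?Q. sumphi phi (snd z)) = ereal (real s)"
  proof (rule antisym)
    show "(INF z\<in>?Q. sumphi phi (snd z)) \<le> ereal (real s)"
      by (rule INF_lower2[OF z0Q]) (simp add: z0val)
    show "ereal (real s) \<le> (INF z\<in>?Q. sumphi phi (snd z))"
      by (rule INF_greatest) (use Qlow in auto)
  qed

  have P3: "\<forall>\<rho>::real. ereal \<rho> > left_deriv_at_1 phi / ereal \<alpha> \<longrightarrow>
              argmins (\<lambda>(x, w). sumphi phi w + ereal (\<rho> * inner_ew w (Gmap J p x)))
                {(x, w). f x \<le> ereal \<delta> \<and> x \<in> \<Omega> \<and> w \<in> box01}
            = argmins (\<lambda>(x, w). sumphi phi w) ?Q"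
  proof (intro allI impI)
    fix \<rho> :: real assume rho: "ereal \<rho> > left_deriv_at_1 phi / ereal \<alpha>"
    obtain d where Dd: "D = ereal d"
    proof (cases D)
      case PInf with rho \<alpha>_pos show ?thesis by (simp add: D_def)
    next
      case MInf with Dnm show ?thesis by simp
    qed
    have dr: "d / \<alpha> < \<rho>" using rho Dd \<alpha>_pos by (simp add: D_def)
    from fin_case[OF Dd] have d: "0 \<le> d" "\<forall>t\<in>{0..<1}. 1 - psi t \<le> d * (1 - t)" by auto
    let ?F = "{(x, w). f x \<le> ereal \<delta> \<and> x \<in> \<Omega> \<and> w \<in> box01}"
    let ?P = "\<lambda>(x, w). sumphi phi w + ereal (\<rho> * inner_ew w (Gmap J p x))"
    have Pval: "?P (x, w) = ereal ((\<Sum>i\<in>UNIV. psi (w$i)) + \<rho> * inner_ew w (Gmap J p x))"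
      if "w \<in> box01" for x w using sum_eq[OF that] by simp
    have Flow: "real s \<le> (\<Sum>i\<in>UNIV. psi (w$i)) + \<rho> * inner_ew w (Gmap J p x)
       \<and> (inner_ew w (Gmap J p x) \<noteq> 0 \<longrightarrow> real s < (\<Sum>i\<in>UNIV. psi (w$i)) + \<rho> * inner_ew w (Gmap J p x))"
      if z: "(x, w) \<in> ?F" for x w
    proof -
      let ?I = "inner_ew w (Gmap J p x)"
      have w: "w \<in> box01" and x: "x \<in> {x\<in>\<Omega>. f x \<le> ereal \<delta>}" using z by auto
      have c: "real s \<le> (\<Sum>i\<in>UNIV. psi (w$i)) + d/\<alpha> * ?I"
        by (rule core_real[OF psi0 psi1 d w Gnn \<alpha>_pos card_S[OF x]])
      have I0: "0 \<le> ?I" by (rule inner_nn[OF w])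
      have "d/\<alpha> * ?I \<le> \<rho> * ?I" using dr I0 by (intro mult_right_mono) auto
      moreover have "?I \<noteq> 0 \<longrightarrow> d/\<alpha> * ?I < \<rho> * ?I"
      proof
        assume "?I \<noteq> 0"
        hence "0 < ?I" using I0 by simp
        thus "d/\<alpha> * ?I < \<rho> * ?I" using dr by (rule mult_strict_right_mono[rotated])
      qed
      ultimately show ?thesis using c by auto
    qed
    have z0F: "(x0, w0) \<in> ?F" using x0 w0box by auto
    have Pz0: "?P (x0, w0) = ereal (real s)" using z0val w0inner by simp
    show "argmins ?P ?F = argmins (\<lambda>(x, w). sumphi phi w) ?Q"
    proof (rule set_eqI, rule iffI)
      fix z assume z: "z \<in> argmins ?P ?F"
      obtain x w where zxw: "z = (x, w)" by (cases z)
      have zF: "(x, w) \<in> ?F" and zmin: "\<forall>z'\<in>?F. ?P (x, w) \<le> ?P z'"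
        using z zxw by (auto simp: argmins_def)
      have w: "w \<in> box01" using zF by auto
      have "?P (x, w) \<le> ?P (x0, w0)" using zmin z0F by blast
      hence "?P (x, w) \<le> ereal (real s)" using Pz0 by simp
      hence le: "(\<Sum>i\<in>UNIV. psi (w$i)) + \<rho> * inner_ew w (Gmap J p x) \<le> real s"
        using Pval[OF w] by simp
      hence I0: "inner_ew w (Gmap J p x) = 0" using Flow[OF zF] by linarith
      have zQ: "(x, w) \<in> ?Q" using zF I0 by auto
      have "sumphi phi w \<le> sumphi phi w'" if "(x', w') \<in> ?Q" for x' w'
      proof -
        have "sumphi phi w = ereal (\<Sum>i\<in>UNIV. psi (w$i))" by (rule sum_eq[OF w])
        also have "\<dots> \<le> ereal (real s)" using le I0 by simp
        also have "\<dots> \<le> sumphi phi w'" by (rule Qlow[OF that])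
        finally show ?thesis .
      qed
      thus "z \<in> argmins (\<lambda>(x, w). sumphi phi w) ?Q" using zQ zxw by (auto simp: argmins_def)
    next
      fix z assume z: "z \<in> argmins (\<lambda>(x, w). sumphi phi w) ?Q"
      obtain x w where zxw: "z = (x, w)" by (cases z)
      have zQ: "(x, w) \<in> ?Q" and zmin: "\<forall>z'\<in>?Q. (\<lambda>(x, w). sumphi phi w) (x, w) \<le> (\<lambda>(x, w). sumphi phi w) z'"
        using z zxw by (auto simp: argmins_def)
      have w: "w \<in> box01" and I0: "inner_ew w (Gmap J p x) = 0" using zQ by auto
      have "(\<lambda>(x, w). sumphi phi w) (x, w) \<le> (\<lambda>(x, w). sumphi phi w) (x0, w0)" using zmin z0Q by blast
      hence "sumphi phi w \<le> ereal (real s)" using z0val by simp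
      hence le: "(\<Sum>i\<in>UNIV. psi (w$i)) \<le> real s" using sum_eq[OF w] by simp
      have zF: "(x, w) \<in> ?F" using zQ by auto
      have "?P (x, w) \<le> ?P z'" if "z' \<in> ?F" for z'
      proof -
        obtain x' w' where z': "z' = (x', w')" by (cases z')
        have w': "w' \<in> box01" using that z' by auto
        have "?P (x, w) = ereal (\<Sum>i\<in>UNIV. psi (w$i))" using sum_eq[OF w] I0 by simp
        also have "\<dots> \<le> ereal (real s)" using le by simp
        also have "\<dots> \<le> ?P z'" using Flow[of x' w'] that z' Pval[OF w'] by simp
        finally show ?thesis .
      qed
      thus "z \<in> argmins ?P ?F" using zF zxw by (auto simp: argmins_def)
    qed
  qed
  show ?thesis using P1 P2 P3 by blast
qed

end
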